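(* Let $X$ be a real reflexive Banach space, $T:X\rightrightarrows X^{\ast}$ maximally monotone, and $h,h'\in\mathcal{H}(T)$; set $E=L^{h}$ and $E'=L^{h'}$. Then: (i) $E$ and $E'$ are mutually additive if and only if $h^{\ast}\circ i\le h'$; in particular, $E$ is additive if and only if $h^{\ast}\circ i\le h$; (ii) $h=h^{\ast}\circ i$ if and only if $L^{h}$ is maximally additive. In particular, $E$ is mutually additive with $L^{h^{\ast}\circ i}$, and $L^{h^{\ast}\circ i}$ contains (in the sense $E''(\epsilon,x)\subset L^{h^{\ast}\circ i}(\epsilon,x)$ for all $\epsilon\ge0,x\in X$) every enlargement $E''=L^{g}$, $g\in\mathcal{H}(T)$, that is mutually additive with $E$.
   Context: $X^{\ast}$ is the dual of $X$ with pairing $\langle\cdot,\cdot\rangle$. The dual of $X\times X^{\ast}$ is identified with $X^{\ast}\times X$ via $\langle (x,x^{\ast}),(y^{\ast},y)\rangle=\langle x,y^{\ast}\rangle+\langle y,x^{\ast}\rangle$; for $g:X\times X^{\ast}\to\mathbb{R}\cup\{+\infty\}$, $g^{\ast}(y^{\ast},y)=\sup_{(x,x^{\ast})}\{\langle x,y^{\ast}\rangle+\langle y,x^{\ast}\rangle-g(x,x^{\ast})\}$, and $i(x,x^{\ast})=(x^{\ast},x)$. $\mathcal{H}(T)$ is the family of lower semicontinuous convex $h:X\times X^{\ast}\to\mathbb{R}\cup\{+\infty\}$ with $h(x,x^{\ast})\ge\langle x,x^{\ast}\rangle$ everywhere and equality whenever $x^{\ast}\in T(x)$ (if $h\in\mathcal{H}(T)$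 then $h^{\ast}\circ i\in\mathcal{H}(T)$). For $g\in\mathcal{H}(T)$, $L^{g}:[0,\infty)\times X\rightrightarrows X^{\ast}$ is $L^{g}(\epsilon,x)=\{x^{\ast}:g(x,x^{\ast})\le\langle x,x^{\ast}\rangle+\epsilon\}$; every enlargement in the family $\mathbb{E}(T)$ is of the form $L^g$ for a unique $g\in\mathcal{H}(T)$. Two enlargements $E,E'$ are mutually additive if $\langle x-y,x^{\ast}-y^{\ast}\rangle\ge-(\epsilon+\eta)$ for all $\epsilon,\eta\ge0$, $x,y\in X$, $x^{\ast}\in E(\epsilon,x)$, $y^{\ast}\in E'(\eta,y)$; $E$ is additive if it is mutually additive with itself. An additive $E=L^{h}$ is maximally additive if whenever $E'=L^{g}$ ($g\in\mathcal{H}(T)$) is additive with $E(\epsilon,x)\subset E'(\epsilon,x)$ for all $\epsilon\ge0$, $x\in X$, then $E=E'$. *)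

theory Defs
  imports "HOL-Analysis.Analysis"
begin

text \<open>The space X is a type 'a of class banach; its dual X* is 'a \<Rightarrow>L real.
  The pairing is pair x xs = xs x.  Functions on X \<times> X* take values in ereal.\<close>

definition pair :: "'a::real_normed_vector \<Rightarrow> ('a \<Rightarrow>\<^sub>L real) \<Rightarrow> real" where
  "pair x xs = blinfun_apply xs x"

definition reflexive_space :: "'a::real_normed_vector itself \<Rightarrow> bool" where
  "reflexive_space (_::'a itself) \<longleftrightarrow>
     (\<forall>\<phi> :: ('a \<Rightarrow>\<^sub>L real) \<Rightarrow>\<^sub>L real. \<exists>x::'a. \<forall>f. blinfun_apply \<phi> f = blinfun_apply f x)"

definition monotone_op :: "('a::real_normed_vector \<Rightarrow> ('a \<Rightarrow>\<^sub>L real) set) \<Rightarrow> bool" where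
  "monotone_op T \<longleftrightarrow> (\<forall>x y xs ys. xs \<in> T x \<longrightarrow> ys \<in> T y \<longrightarrow> pair (x - y) (xs - ys) \<ge> 0)"

definition maximal_monotone :: "('a::real_normed_vector \<Rightarrow> ('a \<Rightarrow>\<^sub>L real) set) \<Rightarrow> bool" where
  "maximal_monotone T \<longleftrightarrow> monotone_op T \<and>
     (\<forall>S. monotone_op S \<and> (\<forall>x. T x \<subseteq> S x) \<longrightarrow> S = T)"

text \<open>Lower semicontinuity (norm topology on X \<times> X*): closed sublevel sets.\<close>
definition lsc_fun :: "('b::topological_space \<Rightarrow> ereal) \<Rightarrow> bool" where
  "lsc_fun g \<longleftrightarrow> (\<forall>c::ereal. closed {z. g z \<le> c})"

definition convex_ereal :: "('b::real_vector \<Rightarrow> ereal) \<Rightarrow> bool" where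
  "convex_ereal g \<longleftrightarrow> (\<forall>u v t. 0 < t \<and> t < 1 \<longrightarrow>
      g (t *\<^sub>R u + (1 - t) *\<^sub>R v) \<le> ereal t * g u + ereal (1 - t) * g v)"

text \<open>Fenchel conjugate on X \<times> X*, with dual identified with X* \<times> X.\<close>
definition fconj :: "('a::real_normed_vector \<times> ('a \<Rightarrow>\<^sub>L real) \<Rightarrow> ereal)
    \<Rightarrow> ('a \<Rightarrow>\<^sub>L real) \<times> 'a \<Rightarrow> ereal" where
  "fconj g = (\<lambda>(ys, y). Sup ((\<lambda>(x, xs). ereal (pair x ys + pair y xs) - g (x, xs)) ` UNIV))"

definition iswap :: "'a \<times> 'b \<Rightarrow> 'b \<times> 'a" where
  "iswap z = (snd z, fst z)"

definition HT :: "('a::real_normed_vector \<Rightarrow> ('a \<Rightarrow>\<^sub>L real) set)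
    \<Rightarrow> ('a \<times> ('a \<Rightarrow>\<^sub>L real) \<Rightarrow> ereal) set" where
  "HT T = {h. lsc_fun h \<and> convex_ereal h
              \<and> (\<forall>x xs. h (x, xs) \<ge> ereal (pair x xs))
              \<and> (\<forall>x xs. xs \<in> T x \<longrightarrow> h (x, xs) = ereal (pair x xs))}"

definition Lenl :: "('a::real_normed_vector \<times> ('a \<Rightarrow>\<^sub>L real) \<Rightarrow> ereal)
    \<Rightarrow> real \<Rightarrow> 'a \<Rightarrow> ('a \<Rightarrow>\<^sub>L real) set" where
  "Lenl g \<epsilon> x = {xs. g (x, xs) \<le> ereal (pair x xs + \<epsilon>)}"

definition mutually_additive :: "(real \<Rightarrow> 'a::real_normed_vector \<Rightarrow> ('a \<Rightarrow>\<^sub>L real) set)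
    \<Rightarrow> (real \<Rightarrow> 'a \<Rightarrow> ('a \<Rightarrow>\<^sub>L real) set) \<Rightarrow> bool" where
  "mutually_additive E E' \<longleftrightarrow> (\<forall>\<epsilon> \<eta> x y xs ys. \<epsilon> \<ge> 0 \<longrightarrow> \<eta> \<ge> 0 \<longrightarrow>
      xs \<in> E \<epsilon> x \<longrightarrow> ys \<in> E' \<eta> y \<longrightarrow> pair (x - y) (xs - ys) \<ge> - (\<epsilon> + \<eta>))"

definition additive :: "(real \<Rightarrow> 'a::real_normed_vector \<Rightarrow> ('a \<Rightarrow>\<^sub>L real) set) \<Rightarrow> bool" where
  "additive E \<longleftrightarrow> mutually_additive E E"

definition maximally_additive :: "('a::real_normed_vector \<Rightarrow> ('a \<Rightarrow>\<^sub>L real) set)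
    \<Rightarrow> ('a \<times> ('a \<Rightarrow>\<^sub>L real) \<Rightarrow> ereal) \<Rightarrow> bool" where
  "maximally_additive T h \<longleftrightarrow> additive (Lenl h) \<and>
     (\<forall>g \<in> HT T. additive (Lenl g) \<and> (\<forall>\<epsilon> x. \<epsilon> \<ge> 0 \<longrightarrow> Lenl h \<epsilon> x \<subseteq> Lenl g \<epsilon> x)
        \<longrightarrow> (\<forall>\<epsilon> x. \<epsilon> \<ge> 0 \<longrightarrow> Lenl h \<epsilon> x = Lenl g \<epsilon> x))"

end

theory Submission
  imports Defs
begin

definition PP :: "('a::real_normed_vector \<times> ('a \<Rightarrow>\<^sub>L real)) \<Rightarrow> ('a \<times> ('a \<Rightarrow>\<^sub>L real)) \<Rightarrow> real" where
  "PP z w = pair (fst w) (snd z) + pair (fst z) (snd w)"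

definition pp :: "('a::real_normed_vector \<times> ('a \<Rightarrow>\<^sub>L real)) \<Rightarrow> real" where
  "pp z = pair (fst z) (snd z)"

definition hat :: "('a::real_normed_vector \<times> ('a \<Rightarrow>\<^sub>L real) \<Rightarrow> ereal) \<Rightarrow> 'a \<times> ('a \<Rightarrow>\<^sub>L real) \<Rightarrow> ereal" where
  "hat h z = (SUP w. ereal (PP z w) - h w)"

lemma hat_eq: "fconj h \<circ> iswap = hat h"
  by (rule ext) (auto simp: fconj_def iswap_def hat_def PP_def case_prod_beta intro!: arg_cong[where f=Sup])

lemma PP_sym: "PP z w = PP w z" by (simp add: PP_def)
lemma PP_self: "PP z z = 2 * pp z" by (simp add: PP_def pp_def)

lemma hat_upper: "ereal (PP z w) - h w \<le> hat h z"
  unfolding hat_def by (rule SUP_upper) simp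

lemma hat_least: "(\<And>w. ereal (PP z w) - h w \<le> c) \<Longrightarrow> hat h z \<le> c"
  unfolding hat_def by (rule SUP_least) simp

lemma ereal_diff_swap: "ereal a - x \<le> y \<Longrightarrow> ereal a - y \<le> (x::ereal)"
  by (cases x; cases y) auto

lemma hat_anti: "(\<And>w. g w \<le> h w) \<Longrightarrow> hat h z \<le> hat g z"
  by (rule hat_least, rule order_trans[OF _ hat_upper], rule ereal_minus_mono) auto

lemma hathat_le: "hat (hat h) z \<le> h z"
proof (rule hat_least)
  fix w
  have "ereal (PP w z) - h z \<le> hat h w" by (rule hat_upper)
  thus "ereal (PP z w) - hat h w \<le> h z" by (simp add: PP_sym ereal_diff_swap)
qed

lemma hat3: "hat (hat (hat h)) = hat h"
proof (rule ext, rule antisym)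
  fix z show "hat (hat (hat h)) z \<le> hat h z" by (rule hathat_le)
  show "hat h z \<le> hat (hat (hat h)) z" by (rule hat_anti) (rule hathat_le)
qed


lemma pair_diff: "pair (x - y) (xs - ys) = pp (x,xs) + pp (y,ys) - PP (y,ys) (x,xs)"
  by (simp add: pair_def pp_def PP_def blinfun.bilinear_simps)

lemma ma_of_hat:
  assumes hp: "\<And>z. ereal (pp z) \<le> h z" and le: "\<And>z. hat h z \<le> h' z"
  shows "mutually_additive (Lenl h) (Lenl h')"
  unfolding mutually_additive_def
proof (intro allI impI)
  fix \<epsilon> \<eta> x y xs ys assume "0 \<le> (\<epsilon>::real)" "0 \<le> (\<eta>::real)" and
    m1: "xs \<in> Lenl h \<epsilon> x" and m2: "ys \<in> Lenl h' \<eta> y"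
  have a: "h (x,xs) \<le> ereal (pp (x,xs) + \<epsilon>)" using m1 by (simp add: Lenl_def pp_def)
  have b: "h' (y,ys) \<le> ereal (pp (y,ys) + \<eta>)" using m2 by (simp add: Lenl_def pp_def)
  have c: "ereal (PP (y,ys) (x,xs)) - h (x,xs) \<le> h' (y,ys)" using hat_upper le order_trans by blast
  obtain r where r: "h (x,xs) = ereal r" using a hp[of "(x,xs)"] by (cases "h (x,xs)") auto
  have "ereal (PP (y,ys) (x,xs) - r) \<le> ereal (pp (y,ys) + \<eta>)" using c b r order_trans by fastforce
  hence "PP (y,ys) (x,xs) - r \<le> pp (y,ys) + \<eta>" by simp
  moreover have "r \<le> pp (x,xs) + \<epsilon>" using a r by simp
  ultimately show "- (\<epsilon> + \<eta>) \<le> pair (x - y) (xs - ys)" unfolding pair_diff by linarith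
qed

lemma hat_of_ma:
  fixes h h' :: "'a::real_normed_vector \<times> ('a \<Rightarrow>\<^sub>L real) \<Rightarrow> ereal"
  assumes hp: "\<And>z. ereal (pp z) \<le> h z" and hp': "\<And>z. ereal (pp z) \<le> h' z"
    and ma: "mutually_additive (Lenl h) (Lenl h')"
  shows "hat h z \<le> h' z"
proof (rule hat_least)
  fix w :: "'a \<times> ('a \<Rightarrow>\<^sub>L real)"
  obtain y ys where z: "z = (y,ys)" by (cases z)
  obtain x xs where w: "w = (x,xs)" by (cases w)
  show "ereal (PP z w) - h w \<le> h' z"
  proof (cases "h w = \<infinity> \<or> h' z = \<infinity>")
    case True thus ?thesis by auto
  next
    case False
    obtain a where a: "h w = ereal a" using False hp[of w] by (cases "h w") auto
    obtain b where b: "h' z = ereal b" using False hp'[of z] by (cases "h' z") auto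
    have pa: "pp w \<le> a" using hp[of w] a by simp
    have pb: "pp z \<le> b" using hp'[of z] b by simp
    have "xs \<in> Lenl h (a - pp w) x" using a w by (simp add: Lenl_def pp_def)
    moreover have "ys \<in> Lenl h' (b - pp z) y" using b z by (simp add: Lenl_def pp_def)
    ultimately have "- ((a - pp w) + (b - pp z)) \<le> pair (x - y) (xs - ys)"
      using ma pa pb unfolding mutually_additive_def
      by (metis diff_ge_0_iff_ge)
    thus ?thesis using a b z w unfolding pair_diff by simp
  qed
qed

lemma closed_ereal_minus:
  assumes "continuous_on UNIV f"
  shows "closed {z. ereal (f z) - e \<le> (c::ereal)}"
proof (cases e)
  case (real r)
  show ?thesis
  proof (cases c)
    case (real s)
    have "{z. ereal (f z) - e \<le> c} = {z. f z - r \<le> s}" using \<open>e = _\<close> real by auto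
    thus ?thesis by (simp add: closed_Collect_le assms continuous_on_diff continuous_on_const)
  next
    case PInf thus ?thesis by simp
  next
    case MInf thus ?thesis using \<open>e = _\<close> by simp
  qed
next
  case PInf thus ?thesis by simp
next
  case MInf
  thus ?thesis by (cases "c = \<infinity>") auto
qed

lemma cont_PP: "continuous_on UNIV (\<lambda>z. PP z w)"
  unfolding PP_def pair_def by (intro continuous_intros)

lemma hat_lsc: "lsc_fun (hat h)"
  unfolding lsc_fun_def
proof
  fix c
  have "{z. hat h z \<le> c} = (\<Inter>w. {z. ereal (PP z w) - h w \<le> c})"
    by (auto intro: hat_least order_trans[OF hat_upper])
  thus "closed {z. hat h z \<le> c}" by (auto intro!: closed_INT closed_ereal_minus cont_PP)
qed


lemma PP_lin: "PP (t *\<^sub>R u + s *\<^sub>R v) w = t * PP u w + s * PP v w"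
  by (simp add: PP_def pair_def blinfun.bilinear_simps algebra_simps)

lemma hat_convex:
  assumes "\<And>w. h w \<noteq> -\<infinity>"
  shows "convex_ereal (hat h)"
  unfolding convex_ereal_def
proof (intro allI impI)
  fix u v and t :: real assume t: "0 < t \<and> t < 1"
  show "hat h (t *\<^sub>R u + (1 - t) *\<^sub>R v) \<le> ereal t * hat h u + ereal (1 - t) * hat h v"
  proof (rule hat_least)
    fix w
    show "ereal (PP (t *\<^sub>R u + (1 - t) *\<^sub>R v) w) - h w \<le> ereal t * hat h u + ereal (1 - t) * hat h v"
    proof (cases "h w")
      case (real r)
      have 1: "ereal (PP u w - r) \<le> hat h u" using hat_upper[of u w h] real by simp
      have 2: "ereal (PP v w - r) \<le> hat h v" using hat_upper[of v w h] real by simp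
      have "ereal t * ereal (PP u w - r) + ereal (1-t) * ereal (PP v w - r)
            \<le> ereal t * hat h u + ereal (1 - t) * hat h v"
        by (rule add_mono; rule ereal_mult_left_mono) (use 1 2 t in auto)
      moreover have "ereal t * ereal (PP u w - r) + ereal (1-t) * ereal (PP v w - r)
          = ereal (PP (t *\<^sub>R u + (1 - t) *\<^sub>R v) w) - h w"
        using real unfolding PP_lin by (simp add: algebra_simps)
      ultimately show ?thesis by simp
    qed (use assms in auto)
  qed
qed

lemma ereal_half_le: "ereal p \<le> X \<Longrightarrow> ereal q \<le> Y \<Longrightarrow> ereal ((p+q)/2) \<le> (X+Y)/2"
  by (cases X; cases Y) auto

lemma ereal_half_less: "ereal p < X \<Longrightarrow> ereal q < Y \<Longrightarrow> ereal ((p+q)/2) < (X+Y)/2"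
  by (cases X; cases Y) auto

lemma ereal_half_split:
  assumes "ereal s < (X+Y)/2" "X \<noteq> -\<infinity>" "Y \<noteq> -\<infinity>"
  shows "\<exists>r1 r2. ereal r1 < X \<and> ereal r2 < Y \<and> s \<le> (r1+r2)/2"
proof (cases X)
  case (real p) note X = this
  show ?thesis
  proof (cases Y)
    case (real q)
    define d where "d = (p+q)/2 - s"
    have "ereal (p - d) < X \<and> ereal (q - d) < Y \<and> s \<le> ((p-d)+(q-d))/2"
      using assms X real by (auto simp: d_def)
    thus ?thesis by blast
  next
    case PInf
    have "ereal (p - 1) < X \<and> ereal (2 * s - (p-1)) < Y \<and> s \<le> ((p-1)+(2 * s - (p-1)))/2"
      using X PInf by auto
    thus ?thesis by blast
  qed (use assms in auto)
next
  case PInf note X = this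
  show ?thesis
  proof (cases Y)
    case (real q)
    have "ereal (2 * s - (q-1)) < X \<and> ereal (q-1) < Y \<and> s \<le> ((2 * s - (q-1)) + (q-1))/2"
      using X real by auto
    thus ?thesis by blast
  next
    case PInf
    have "ereal s < X \<and> ereal s < Y \<and> s \<le> (s+s)/2" using X PInf by auto
    thus ?thesis by blast
  qed (use assms in auto)
qed (use assms in auto)

lemma lsc_open: "lsc_fun a \<Longrightarrow> open {z. r < a z}"
  unfolding lsc_fun_def
proof -
  assume "\<forall>c. closed {z. a z \<le> c}"
  hence "open (- {z. a z \<le> r})" by auto
  moreover have "- {z. a z \<le> r} = {z. r < a z}" by auto
  ultimately show ?thesis by simp
qed

lemma halfsum_lsc:
  assumes a: "lsc_fun a" and b: "lsc_fun b" and na: "\<And>z. a z \<noteq> -\<infinity>" and nb: "\<And>z. b z \<noteq> -\<infinity>"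
  shows "lsc_fun (\<lambda>z. (a z + b z)/2)"
  unfolding lsc_fun_def
proof
  fix c :: ereal
  have "open {z. c < (a z + b z)/2}"
  proof (subst open_subopen, intro ballI)
    fix z assume "z \<in> {z. c < (a z + b z)/2}"
    hence "c < (a z + b z)/2" by simp
    then obtain s where s1: "c < ereal s" and s2: "ereal s < (a z + b z)/2" using ereal_dense2 by blast
    obtain r1 r2 where r: "ereal r1 < a z" "ereal r2 < b z" "s \<le> (r1+r2)/2"
      using ereal_half_split[OF s2 na nb] by blast
    let ?T = "{z. ereal r1 < a z} \<inter> {z. ereal r2 < b z}"
    have "open ?T" using lsc_open[OF a] lsc_open[OF b] by auto
    moreover have "z \<in> ?T" using r by auto
    moreover have "?T \<subseteq> {z. c < (a z + b z)/2}"
    proof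
      fix y assume "y \<in> ?T"
      hence "ereal r1 < a y" "ereal r2 < b y" by auto
      hence "ereal ((r1+r2)/2) < (a y + b y)/2" by (rule ereal_half_less)
      moreover have "c < ereal ((r1+r2)/2)" using s1 r(3) by (meson ereal_less_eq(3) less_le_trans)
      ultimately show "y \<in> {z. c < (a z + b z)/2}" by auto
    qed
    ultimately show "\<exists>T. open T \<and> z \<in> T \<and> T \<subseteq> {z. c < (a z + b z)/2}" by blast
  qed
  hence "closed (- {z. c < (a z + b z)/2})" by (rule closed_Compl)
  moreover have "- {z. c < (a z + b z)/2} = {z. (a z + b z)/2 \<le> c}" by auto
  ultimately show "closed {z. (a z + b z)/2 \<le> c}" by simp
qed


lemma ereal_conv_half:
  assumes "A \<le> ereal t * a1 + ereal (1-t) * a2" "B \<le> ereal t * b1 + ereal (1-t) * b2"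
    "a1 \<noteq> -\<infinity>" "a2 \<noteq> -\<infinity>" "b1 \<noteq> -\<infinity>" "b2 \<noteq> -\<infinity>" "0 < t" "t < 1"
  shows "(A+B)/2 \<le> ereal t * ((a1+b1)/2) + ereal (1-t) * ((a2+b2)/2)"
proof (cases "a1 = \<infinity> \<or> a2 = \<infinity> \<or> b1 = \<infinity> \<or> b2 = \<infinity>")
  case True
  hence "ereal t * ((a1+b1)/2) + ereal (1-t) * ((a2+b2)/2) = \<infinity>"
    using assms by (cases a1; cases a2; cases b1; cases b2) (auto simp: ereal_mult_infty)
  thus ?thesis by (metis ereal_less_eq(1))
next
  case False
  then obtain p1 p2 q1 q2 where e: "a1 = ereal p1" "a2 = ereal p2" "b1 = ereal q1" "b2 = ereal q2"
    using assms by (cases a1; cases a2; cases b1; cases b2) auto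
  show ?thesis
  proof (cases "A = -\<infinity> \<or> B = -\<infinity>")
    case True thus ?thesis using assms e by (cases A; cases B) auto
  next
    case False
    then obtain x y where "A = ereal x" "B = ereal y" using assms e by (cases A; cases B) auto
    thus ?thesis using assms e by (simp add: field_simps)
  qed
qed

lemma halfsum_convex:
  assumes a: "convex_ereal a" and b: "convex_ereal b" and na: "\<And>z. a z \<noteq> -\<infinity>" and nb: "\<And>z. b z \<noteq> -\<infinity>"
  shows "convex_ereal (\<lambda>z. (a z + b z)/2)"
  unfolding convex_ereal_def
proof (intro allI impI)
  fix u v and t :: real assume t: "0 < t \<and> t < 1"
  show "(a (t *\<^sub>R u + (1 - t) *\<^sub>R v) + b (t *\<^sub>R u + (1 - t) *\<^sub>R v)) / 2
         \<le> ereal t * ((a u + b u) / 2) + ereal (1 - t) * ((a v + b v) / 2)"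
    by (rule ereal_conv_half) (use a b na nb t in \<open>auto simp: convex_ereal_def\<close>)
qed

lemma hat_halfsum:
  assumes na: "\<And>z. a z \<noteq> -\<infinity>" and nb: "\<And>z. b z \<noteq> -\<infinity>"
  shows "hat (\<lambda>z. (a z + b z)/2) z \<le> (hat a z + hat b z)/2"
proof (rule hat_least)
  fix w
  show "ereal (PP z w) - (a w + b w) / 2 \<le> (hat a z + hat b z) / 2"
  proof (cases "a w = \<infinity> \<or> b w = \<infinity>")
    case True thus ?thesis using na[of w] nb[of w] by (cases "a w"; cases "b w") auto
  next
    case False
    then obtain p q where e: "a w = ereal p" "b w = ereal q" using na[of w] nb[of w]
      by (cases "a w"; cases "b w") auto
    have 1: "ereal (PP z w - p) \<le> hat a z" using hat_upper[of z w a] e by simp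
    have 2: "ereal (PP z w - q) \<le> hat b z" using hat_upper[of z w b] e by simp
    have "ereal (((PP z w - p) + (PP z w - q))/2) \<le> (hat a z + hat b z)/2"
      by (rule ereal_half_le[OF 1 2])
    thus ?thesis using e by (simp add: field_simps)
  qed
qed

lemma ereal_half_le2: "A \<le> H \<Longrightarrow> B \<le> H \<Longrightarrow> (A+B)/2 \<le> (H::ereal)"
  by (cases A; cases B; cases H) auto

lemma ereal_half_ge: "ereal (2 * p) - K \<le> B \<Longrightarrow> K \<noteq> -\<infinity> \<Longrightarrow> ereal p \<le> (K + B)/2"
  by (cases K; cases B) auto

lemma HT_pp: "g \<in> HT T \<Longrightarrow> ereal (pp z) \<le> g z"
  by (cases z) (auto simp: HT_def pp_def)

lemma HT_graph: "g \<in> HT T \<Longrightarrow> xs \<in> T x \<Longrightarrow> g (x,xs) = ereal (pp (x,xs))"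
  by (auto simp: HT_def pp_def)

lemma Lenl_sub_le:
  assumes hp: "\<And>z. ereal (pp z) \<le> h z"
    and sub: "\<forall>\<epsilon> x. \<epsilon> \<ge> 0 \<longrightarrow> Lenl h \<epsilon> x \<subseteq> Lenl g \<epsilon> x"
  shows "g z \<le> h z"
proof (cases "h z")
  case (real r)
  obtain x xs where z: "z = (x,xs)" by (cases z)
  have "xs \<in> Lenl h (r - pp z) x" using real z by (simp add: Lenl_def pp_def)
  moreover have "r - pp z \<ge> 0" using hp[of z] real by simp
  ultimately have "xs \<in> Lenl g (r - pp z) x" using sub by blast
  thus ?thesis using real z by (simp add: Lenl_def pp_def)
qed (use hp[of z] in auto)

lemma graph_nonempty:
  assumes m: "maximal_monotone (T :: 'a::real_normed_vector \<Rightarrow> ('a \<Rightarrow>\<^sub>L real) set)"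
  shows "\<exists>x xs. xs \<in> T x"
proof (rule ccontr)
  assume n: "\<not> (\<exists>x xs. xs \<in> T x)"
  define S where "S = (\<lambda>x::'a. if x = 0 then {0::'a \<Rightarrow>\<^sub>L real} else {})"
  have "monotone_op S" unfolding monotone_op_def S_def pair_def by auto
  moreover have "\<forall>x. T x \<subseteq> S x" using n by auto
  ultimately have "S = T" using m unfolding maximal_monotone_def by blast
  moreover have "S 0 = {0}" by (simp add: S_def)
  ultimately have "0 \<in> T 0" by simp
  thus False using n by blast
qed

lemma fix_maxadd:
  assumes hH: "h \<in> HT T" and fx: "h = hat h"
  shows "maximally_additive T h"
proof -
  have hp: "\<And>z. ereal (pp z) \<le> h z" using HT_pp[OF hH] .
  have add: "additive (Lenl h)" unfolding additive_def
    by (rule ma_of_hat[OF hp]) (metis fx order_refl)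
  show ?thesis unfolding maximally_additive_def
  proof (intro conjI add ballI impI allI)
    fix g and \<epsilon> :: real and x assume gH: "g \<in> HT T"
      and gg: "additive (Lenl g) \<and> (\<forall>\<epsilon> x. 0 \<le> \<epsilon> \<longrightarrow> Lenl h \<epsilon> x \<subseteq> Lenl g \<epsilon> x)"
      and e: "0 \<le> \<epsilon>"
    have gp: "\<And>z. ereal (pp z) \<le> g z" using HT_pp[OF gH] .
    have gh: "\<And>z. g z \<le> h z" by (rule Lenl_sub_le[OF hp]) (use gg in auto)
    have hg: "\<And>z. hat g z \<le> g z"
      by (rule hat_of_ma[OF gp gp]) (use gg in \<open>auto simp: additive_def\<close>)
    have "\<And>z. h z \<le> g z"
    proof -
      fix z
      have "h z = hat h z" using fx by metis
      also have "\<dots> \<le> hat g z" by (rule hat_anti[OF gh])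
      also have "\<dots> \<le> g z" by (rule hg)
      finally show "h z \<le> g z" .
    qed
    hence "g = h" using gh by (intro ext antisym) auto
    thus "Lenl h \<epsilon> x = Lenl g \<epsilon> x" by simp
  qed
qed


lemma maxadd_fix:
  assumes mm: "maximal_monotone T" and hH: "h \<in> HT T" and ma: "maximally_additive T h"
  shows "h = hat h"
proof -
  have hp: "\<And>z. ereal (pp z) \<le> h z" using HT_pp[OF hH] .
  have add: "additive (Lenl h)" using ma by (simp add: maximally_additive_def)
  have hle: "\<And>z. hat h z \<le> h z" by (rule hat_of_ma[OF hp hp]) (use add in \<open>simp add: additive_def\<close>)
  have ge: "h z0 \<le> hat h z0" for z0
  proof (rule ccontr)
    assume "\<not> h z0 \<le> hat h z0"
    hence lt: "hat h z0 < h z0" by simp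
    obtain x1 xs1 where g1: "xs1 \<in> T x1" using graph_nonempty[OF mm] by blast
    have hw1: "h (x1,xs1) = ereal (pp (x1,xs1))" by (rule HT_graph[OF hH g1])
    have "ereal (PP z0 (x1,xs1) - pp (x1,xs1)) \<le> hat h z0" using hat_upper[of z0 "(x1,xs1)" h] hw1 by simp
    then obtain cr where c: "hat h z0 = ereal cr" using lt by (cases "hat h z0") auto
    define u where "u = h(z0 := ereal cr)"
    define k where "k = hat u"
    define g where "g = (\<lambda>z. (k z + hat k z)/2)"
    have u_le: "u z \<le> h z" for z using lt c by (auto simp: u_def)
    have u_ninf: "u z \<noteq> -\<infinity>" for z using hp[of z] by (auto simp: u_def)
    have k_low: "ereal (PP z z0 - cr) \<le> k z" for z using hat_upper[of z z0 u] by (simp add: k_def u_def)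
    have k_ninf: "k z \<noteq> -\<infinity>" for z using k_low[of z] by auto
    have k_z0: "k z0 \<le> ereal (max cr (2 * pp z0 - cr))"
      unfolding k_def
    proof (rule hat_least)
      fix w show "ereal (PP z0 w) - u w \<le> ereal (max cr (2 * pp z0 - cr))"
      proof (cases "w = z0")
        case True thus ?thesis by (simp add: u_def PP_self)
      next
        case False
        hence "ereal (PP z0 w) - u w \<le> ereal cr" using hat_upper[of z0 w h] c by (simp add: u_def)
        thus ?thesis by (simp add: order_trans)
      qed
    qed
    have hk_ninf: "hat k z \<noteq> -\<infinity>" for z
    proof -
      define M where "M = max cr (2 * pp z0 - cr)"
      have "ereal (PP z z0) - ereal M \<le> ereal (PP z z0) - k z0"
        by (rule ereal_minus_mono) (use k_z0 in \<open>auto simp: M_def\<close>)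
      hence "ereal (PP z z0 - M) \<le> hat k z" using hat_upper[of z z0 k]
        by (metis ereal_minus(1) order_trans)
      thus ?thesis by auto
    qed
    have k_le: "k z \<le> h z" for z
      unfolding k_def
    proof (rule hat_least)
      fix w show "ereal (PP z w) - u w \<le> h z"
      proof (cases "w = z0")
        case True
        have "ereal (PP z0 z) - h z \<le> ereal cr" using hat_upper[of z0 z h] c by simp
        hence "ereal (PP z0 z) - ereal cr \<le> h z" by (rule ereal_diff_swap)
        thus ?thesis using True by (simp add: u_def PP_sym)
      next
        case False
        thus ?thesis using hat_upper[of z w h] hle[of z] by (simp add: u_def)
      qed
    qed
    have hk_le: "hat k z \<le> h z" for z
      using hathat_le[of u z] u_le[of z] by (simp add: k_def)
    have g_le: "g z \<le> h z" for z unfolding g_def by (rule ereal_half_le2[OF k_le hk_le])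
    have g_ge: "ereal (pp z) \<le> g z" for z
      unfolding g_def
    proof (rule ereal_half_ge)
      show "ereal (2 * pp z) - k z \<le> hat k z" using hat_upper[of z z k] by (simp add: PP_self)
    qed (rule k_ninf)
    have gH: "g \<in> HT T"
      unfolding HT_def
    proof (intro CollectI conjI allI impI)
      show "lsc_fun g" unfolding g_def k_def
        by (rule halfsum_lsc) (use hat_lsc k_ninf hk_ninf in \<open>auto simp: k_def\<close>)
      show "convex_ereal g" unfolding g_def
        by (rule halfsum_convex) (use hat_convex u_ninf k_ninf hk_ninf in \<open>auto simp: k_def\<close>)
      fix x xs
      show "ereal (pair x xs) \<le> g (x, xs)" using g_ge[of "(x,xs)"] by (simp add: pp_def)
      assume "xs \<in> T x"
      hence "h (x,xs) = ereal (pair x xs)" using HT_graph[OF hH] by (simp add: pp_def)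
      thus "g (x, xs) = ereal (pair x xs)" using g_le[of "(x,xs)"] g_ge[of "(x,xs)"]
        by (simp add: pp_def)
    qed
    have hg: "hat g z \<le> g z" for z
    proof -
      have "hat g z \<le> (hat k z + hat (hat k) z)/2" unfolding g_def
        by (rule hat_halfsum) (use k_ninf hk_ninf in auto)
      also have "hat (hat k) = k" unfolding k_def by (rule hat3)
      finally show ?thesis by (simp add: g_def add.commute)
    qed
    have gadd: "additive (Lenl g)" unfolding additive_def by (rule ma_of_hat[OF g_ge hg])
    have sub: "\<forall>\<epsilon> x. 0 \<le> \<epsilon> \<longrightarrow> Lenl h \<epsilon> x \<subseteq> Lenl g \<epsilon> x"
      using g_le order_trans by (fastforce simp: Lenl_def)
    have eqL: "\<forall>\<epsilon> x. 0 \<le> \<epsilon> \<longrightarrow> Lenl h \<epsilon> x = Lenl g \<epsilon> x"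
      using ma gH gadd sub unfolding maximally_additive_def by blast
    have hkz0: "hat k z0 \<le> ereal cr" using hathat_le[of u z0] by (simp add: k_def u_def)
    obtain \<kappa> where kap: "k z0 = ereal \<kappa>" using k_z0 k_ninf[of z0]
      by (cases "k z0") (auto simp: max_def split: if_splits)
    obtain lm where lam: "hat k z0 = ereal lm" using hkz0 hk_ninf[of z0] by (cases "hat k z0") auto
    have gz0: "g z0 = ereal ((\<kappa> + lm)/2)" by (simp add: g_def kap lam)
    obtain x0 xs0 where z0: "z0 = (x0,xs0)" by (cases z0)
    have "pp z0 \<le> (\<kappa> + lm)/2" using g_ge[of z0] gz0 by simp
    moreover have "xs0 \<in> Lenl g ((\<kappa> + lm)/2 - pp z0) x0" using gz0 z0 by (simp add: Lenl_def pp_def)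
    ultimately have "xs0 \<in> Lenl h ((\<kappa> + lm)/2 - pp z0) x0" using eqL by simp
    hence hz0: "h z0 \<le> ereal ((\<kappa> + lm)/2)" using z0 by (simp add: Lenl_def pp_def)
    obtain hr where hr: "h z0 = ereal hr" using hz0 hp[of z0] by (cases "h z0") auto
    have "ereal (PP z0 z0) - h z0 \<le> ereal cr" using hat_upper[of z0 z0 h] c by simp
    hence 1: "2 * pp z0 - hr \<le> cr" using hr by (simp add: PP_self)
    have 2: "cr < hr" using lt c hr by simp
    have 3: "\<kappa> \<le> max cr (2 * pp z0 - cr)" using k_z0 kap by (auto simp: max_def split: if_splits)
    have 4: "lm \<le> cr" using hkz0 lam by simp
    have 5: "hr \<le> (\<kappa> + lm)/2" using hz0 hr by simp
    have 6: "pp z0 \<le> hr" using hp[of z0] hr by simp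
    show False using 1 2 3 4 5 6 by (auto simp: max_def split: if_splits)
  qed
  show ?thesis by (intro ext antisym ge hle)
qed

theorem proposition3p2:
  fixes T :: "'a::banach \<Rightarrow> ('a \<Rightarrow>\<^sub>L real) set"
    and h h' :: "'a \<times> ('a \<Rightarrow>\<^sub>L real) \<Rightarrow> ereal"
  assumes "reflexive_space TYPE('a)"
    and "maximal_monotone T"
    and "h \<in> HT T" and "h' \<in> HT T"
  shows "(mutually_additive (Lenl h) (Lenl h') \<longleftrightarrow> (\<forall>z. (fconj h \<circ> iswap) z \<le> h' z))
       \<and> (additive (Lenl h) \<longleftrightarrow> (\<forall>z. (fconj h \<circ> iswap) z \<le> h z))
       \<and> (h = fconj h \<circ> iswap \<longleftrightarrow> maximally_additive T h)
       \<and> mutually_additive (Lenl h) (Lenl (fconj h \<circ> iswap))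
       \<and> (\<forall>g \<in> HT T. mutually_additive (Lenl h) (Lenl g) \<longrightarrow>
            (\<forall>\<epsilon> x. \<epsilon> \<ge> 0 \<longrightarrow> Lenl g \<epsilon> x \<subseteq> Lenl (fconj h \<circ> iswap) \<epsilon> x))"
  unfolding hat_eq
proof (intro conjI)
  have hp: "\<And>z. ereal (pp z) \<le> h z" using HT_pp[OF assms(3)] .
  have hp': "\<And>z. ereal (pp z) \<le> h' z" using HT_pp[OF assms(4)] .
  show "mutually_additive (Lenl h) (Lenl h') = (\<forall>z. hat h z \<le> h' z)"
    using ma_of_hat[OF hp] hat_of_ma[OF hp hp'] by blast
  show "additive (Lenl h) = (\<forall>z. hat h z \<le> h z)"
    unfolding additive_def using ma_of_hat[OF hp] hat_of_ma[OF hp hp] by blast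
  show "(h = hat h) = maximally_additive T h"
    using fix_maxadd[OF assms(3)] maxadd_fix[OF assms(2,3)] by blast
  show "mutually_additive (Lenl h) (Lenl (hat h))" by (rule ma_of_hat[OF hp]) simp
  show "\<forall>g\<in>HT T. mutually_additive (Lenl h) (Lenl g) \<longrightarrow>
        (\<forall>\<epsilon> x. 0 \<le> \<epsilon> \<longrightarrow> Lenl g \<epsilon> x \<subseteq> Lenl (hat h) \<epsilon> x)"
  proof (intro ballI impI allI subsetI)
    fix g \<epsilon> x xs assume gH: "g \<in> HT T" and m: "mutually_additive (Lenl h) (Lenl g)"
      and xs: "xs \<in> Lenl g \<epsilon> x"
    have "hat h (x,xs) \<le> g (x,xs)" by (rule hat_of_ma[OF hp HT_pp[OF gH] m])
    thus "xs \<in> Lenl (hat h) \<epsilon> x" using xs by (auto simp: Lenl_def)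
  qed
qed

end
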